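(* Let $n\ge1$, $p\in[0,1)$, and let $\mathcal{D}(\rho)=(1-p)\rho+p\,\mathbb{I}/2^n$ be the $n$-qubit global depolarizing channel. Consider Probabilistic Error Cancellation using the optimal quasiprobability decomposition $$\mathcal{D}^{-1}=\Big(1+\frac{(2^{2n}-1)p}{2^{2n}(1-p)}\Big)\mathrm{id}-\sum_{i=1}^{2^{2n}-1}\frac{p}{2^{2n}(1-p)}\mathcal{P}_i,$$ where $\mathcal{P}_i(\rho)=P_i\rho P_i$ ranges over the non-identity $n$-qubit Pauli strings $P_i$, with error mitigation cost $\gamma$ equal to the sum of the squares of the coefficients in this decomposition, and assume perfect correction so that mitigated cost differences equal noise-free cost differences $\Delta C$ while noisy cost differences are $\Delta\widetilde{C}=(1-p)\Delta C$. Then, for any pair of points on the cost landscape with $\Delta C\ne0$, the relative resolvability $\chi_{depol}=\frac{1}{\gamma}\big(\frac{\Delta C}{\Delta\widetilde{C}}\big)^2$ satisfies $$\chi_{depol}=\frac{2^{2n}}{2^{2n}-p(2-p)}\ge1.$$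
   Context: Relative resolvability $\chi=\frac{1}{\gamma}(\Delta C_m/\Delta\widetilde{C})^2$ compares shots needed to resolve two cost values with and without mitigation; $\gamma$ is the error mitigation cost. *)

theory Defs
  imports Complex_Main
begin

text \<open>Coefficients of the quasiprobability decomposition of the inverse of the
  n-qubit global depolarizing channel with parameter p. Index 0 is the identity
  channel; indices 1 .. 4^n - 1 are the non-identity Pauli channels.\<close>
definition pec_coeff :: "nat \<Rightarrow> real \<Rightarrow> nat \<Rightarrow> real" where
  "pec_coeff n p i =
     (if i = 0 then 1 + ((2::real)^(2*n) - 1) * p / ((2::real)^(2*n) * (1 - p))
      else - (p / ((2::real)^(2*n) * (1 - p))))"

definition pec_cost :: "nat \<Rightarrow> real \<Rightarrow> real" where
  "pec_cost n p = (\<Sum>i\<in>{0..<2^(2*n)}. (pec_coeff n p i)^2)"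

definition rel_resolvability :: "real \<Rightarrow> real \<Rightarrow> real \<Rightarrow> real" where
  "rel_resolvability \<gamma> dCm dCnoisy = (1 / \<gamma>) * (dCm / dCnoisy)^2"

end

theory Submission
  imports Defs
begin

lemma cost_eq:
  assumes "p < 1"
  shows "pec_cost n p * (1 - p)^2 = ((2::real)^(2*n) - p * (2 - p)) / (2::real)^(2*n)"
proof -
  define M :: nat where "M = 2^(2*n)"
  have M1: "M \<ge> 1" unfolding M_def by simp
  have NM: "(2::real)^(2*n) = real M" unfolding M_def by simp
  define N :: real where "N = real M"
  define q where "q = p / (N * (1 - p))"
  have Npos: "N \<ge> 1" using M1 unfolding N_def by simp
  have "pec_cost n p = (\<Sum>i\<in>{0..<M}. (pec_coeff n p i)^2)"
    unfolding pec_cost_def M_def by simp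
  also have "\<dots> = (pec_coeff n p 0)^2 + (\<Sum>i\<in>{1..<M}. (pec_coeff n p i)^2)"
    using M1 by (simp add: sum.atLeast_Suc_lessThan)
  also have "(\<Sum>i\<in>{1..<M}. (pec_coeff n p i)^2) = (\<Sum>i\<in>{1..<M}. q^2)"
    by (rule sum.cong) (auto simp: pec_coeff_def q_def N_def NM)
  also have "\<dots> = (N - 1) * q^2" using M1 by (simp add: N_def of_nat_diff)
  also have "pec_coeff n p 0 = 1 + (N - 1) * q"
    by (simp add: pec_coeff_def q_def N_def NM)
  finally have g: "pec_cost n p = (1 + (N - 1) * q)^2 + (N - 1) * q^2" .
  have p1: "1 - p \<noteq> 0" using assms by simp
  have "pec_cost n p * (1 - p)^2 = (N - p * (2 - p)) / N"
  proof -
    have h: "q * (1 - p) = p / N" unfolding q_def using p1 Npos by (simp add: field_simps)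
    have "pec_cost n p * (1 - p)^2 = ((1 - p) + (N - 1) * (q * (1 - p)))^2 + (N - 1) * (q * (1 - p))^2"
      unfolding g by (simp add: power2_eq_square algebra_simps)
    also have "\<dots> = ((1 - p) + (N - 1) * (p / N))^2 + (N - 1) * (p / N)^2" by (simp only: h)
    also have "1 - p + (N - 1) * (p / N) = 1 - p / N" using Npos by (simp add: field_simps)
    also have "(1 - p / N)^2 + (N - 1) * (p / N)^2 = 1 - 2 * p / N + p^2 / N"
      using Npos by (simp add: power2_eq_square diff_divide_distrib add_divide_distrib algebra_simps)
    also have "\<dots> = (N - p * (2 - p)) / N" using Npos
      by (simp add: power2_eq_square diff_divide_distrib add_divide_distrib algebra_simps)
    finally show ?thesis .
  qed
  thus ?thesis by (simp add: NM N_def)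
qed

theorem proposition5:
  fixes n :: nat and p dC dCnoisy :: real
  assumes "n \<ge> 1" and "0 \<le> p" and "p < 1"
    and "dC \<noteq> 0"
    and "dCnoisy = (1 - p) * dC"
  shows "rel_resolvability (pec_cost n p) dC dCnoisy
           = (2::real)^(2*n) / ((2::real)^(2*n) - p * (2 - p))
       \<and> rel_resolvability (pec_cost n p) dC dCnoisy \<ge> 1"
proof -
  define N :: real where "N = 2^(2*n)"
  have N1: "N \<ge> 1" unfolding N_def by simp
  have pp: "p * (2 - p) \<ge> 0" "p * (2 - p) < 1" using assms(2,3)
  proof -
    have "(1 - p)^2 > 0" using assms(3) by simp
    moreover have "p * (2 - p) = 1 - (1 - p)^2" by (simp add: power2_eq_square algebra_simps)
    ultimately show "p * (2 - p) \<ge> 0" "p * (2 - p) < 1" using assms(2,3) power_le_one[of "1 - p" 2] by simp_all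
  qed
  have Dpos: "N - p * (2 - p) > 0" using N1 pp by linarith
  have ce: "pec_cost n p * (1 - p)^2 = (N - p * (2 - p)) / N"
    using cost_eq[OF assms(3)] unfolding N_def .
  have p1: "1 - p \<noteq> 0" using assms by simp
  have r: "rel_resolvability (pec_cost n p) dC dCnoisy = 1 / (pec_cost n p * (1 - p)^2)"
  proof -
    have "dC / ((1 - p) * dC) = 1 / (1 - p)" using assms(4) by simp
    thus ?thesis unfolding rel_resolvability_def assms(5)
      by (simp add: power_one_over)
  qed
  have eq: "rel_resolvability (pec_cost n p) dC dCnoisy = N / (N - p * (2 - p))"
    unfolding r ce by simp
  have "N / (N - p * (2 - p)) \<ge> 1" using Dpos pp by simp
  thus ?thesis using eq by (simp add: N_def)
qed

end
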